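(* Let $s\ge 1$ be real, let $Y\subseteq V$ be nonempty and let $X\subseteq Y$. Then $X$ is $s$-sparse in $Y$ if and only if $|Y_k\cap X|<k/s$ for every integer $k=1,2,\dots,|Y|$. In particular, if $X$ is $s$-sparse in $Y$, then $|X|<|Y|/s$.
   Context: Let $G$ be a finite graph with vertex set $V$, $|V|=n$, and $t=\chi_f(G)$. Fix a weight function $w:V\to\mathbb{R}_{\ge0}$ with $w(V)=t$ and $w(I)\le 1$ for every independent set $I$ of $G$, where $w(A)=\sum_{v\in A}w(v)$. List the vertices as $v_1,\dots,v_n$ so that $w(v_{i+1})\le w(v_i)$ for all $i$. Every subset $X\subseteq V$ is ordered according to this ordering of $V$, and $X_k$ denotes the set of the first $k$ elements of $X$; for real $s\ge1$, $X_s:=X_{\lfloor s\rfloor}$. For real $s\ge1$ and $Y\subseteq V$, a nonempty subset $X\subseteq Y$ is called $s$-principal in $Y$ if $X\subseteq Y_{s|X|}$ (i.e., all elements of $X$ are among the first $\lfloor s|X|\rfloor$ elements of $Y$). A subset $X\subseteq Y$ is called $s$-sparse in $Y$ if $X$ contains no subset that is $s$-principal in $Y$. *)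

theory Defs
  imports Complex_Main
begin

definition indep_set :: "'a set \<Rightarrow> ('a \<Rightarrow> 'a \<Rightarrow> bool) \<Rightarrow> 'a set \<Rightarrow> bool" where
  "indep_set V E I \<longleftrightarrow> I \<subseteq> V \<and> (\<forall>u\<in>I. \<forall>v\<in>I. \<not> E u v)"

definition frac_colouring :: "'a set \<Rightarrow> ('a \<Rightarrow> 'a \<Rightarrow> bool) \<Rightarrow> ('a set \<Rightarrow> real) \<Rightarrow> bool" where
  "frac_colouring V E y \<longleftrightarrow>
     (\<forall>I. y I \<ge> 0) \<and> (\<forall>I. \<not> indep_set V E I \<longrightarrow> y I = 0) \<and>
     (\<forall>v\<in>V. (\<Sum>I\<in>{I. indep_set V E I \<and> v \<in> I}. y I) \<ge> 1)"

definition frac_chromatic :: "'a set \<Rightarrow> ('a \<Rightarrow> 'a \<Rightarrow> bool) \<Rightarrow> real" where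
  "frac_chromatic V E =
     Inf {(\<Sum>I\<in>{I. indep_set V E I}. y I) | y. frac_colouring V E y}"

text \<open>Subsets are ordered according to the fixed listing vs of V;
  first k elements of X.\<close>
definition prefix_set :: "'a list \<Rightarrow> 'a set \<Rightarrow> nat \<Rightarrow> 'a set" where
  "prefix_set vs X k = set (take k (filter (\<lambda>v. v \<in> X) vs))"

definition prefix_set_real :: "'a list \<Rightarrow> 'a set \<Rightarrow> real \<Rightarrow> 'a set" where
  "prefix_set_real vs X s = prefix_set vs X (nat \<lfloor>s\<rfloor>)"

definition principal :: "'a list \<Rightarrow> real \<Rightarrow> 'a set \<Rightarrow> 'a set \<Rightarrow> bool" where
  "principal vs s Y X \<longleftrightarrow> X \<noteq> {} \<and> X \<subseteq> Y \<and> X \<subseteq> prefix_set_real vs Y (s * real (card X))"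

definition sparse :: "'a list \<Rightarrow> real \<Rightarrow> 'a set \<Rightarrow> 'a set \<Rightarrow> bool" where
  "sparse vs s Y X \<longleftrightarrow> X \<subseteq> Y \<and> \<not> (\<exists>Z\<subseteq>X. principal vs s Y Z)"

end

theory Submission
  imports Defs
begin

lemma prefix_mono: "k \<le> m \<Longrightarrow> prefix_set vs Y k \<subseteq> prefix_set vs Y m"
  unfolding prefix_set_def by (metis set_take_subset_set_take)

lemma prefix_len:
  assumes "distinct vs" "Y \<subseteq> set vs"
  shows "length (filter (\<lambda>v. v \<in> Y) vs) = card Y"
    and "set (filter (\<lambda>v. v \<in> Y) vs) = Y"
proof -
  show s: "set (filter (\<lambda>v. v \<in> Y) vs) = Y" using assms by auto
  have "distinct (filter (\<lambda>v. v \<in> Y) vs)" using assms by simp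
  then show "length (filter (\<lambda>v. v \<in> Y) vs) = card Y"
    using s distinct_card by metis
qed

lemma prefix_big:
  assumes "distinct vs" "Y \<subseteq> set vs" "card Y \<le> m"
  shows "prefix_set vs Y m = Y"
  using prefix_len[OF assms(1,2)] assms(3) unfolding prefix_set_def by simp

theorem lemma3:
  fixes V :: "'a set" and E :: "'a \<Rightarrow> 'a \<Rightarrow> bool" and w :: "'a \<Rightarrow> real"
    and vs :: "'a list" and s :: real and X Y :: "'a set"
  assumes finV: "finite V"
    and E_sym: "\<forall>u v. E u v \<longrightarrow> E v u"
    and E_irrefl: "\<forall>v. \<not> E v v"
    and E_in: "\<forall>u v. E u v \<longrightarrow> u \<in> V \<and> v \<in> V"
    and w_nonneg: "\<forall>v\<in>V. w v \<ge> 0"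
    and w_total: "(\<Sum>v\<in>V. w v) = frac_chromatic V E"
    and w_indep: "\<forall>I. indep_set V E I \<longrightarrow> (\<Sum>v\<in>I. w v) \<le> 1"
    and vs_distinct: "distinct vs"
    and vs_set: "set vs = V"
    and vs_sorted: "\<forall>i. Suc i < length vs \<longrightarrow> w (vs ! Suc i) \<le> w (vs ! i)"
    and s_ge: "s \<ge> 1"
    and Y_sub: "Y \<subseteq> V" and Y_ne: "Y \<noteq> {}"
    and X_sub: "X \<subseteq> Y"
  shows "(sparse vs s Y X \<longleftrightarrow>
            (\<forall>k\<in>{1..card Y}. real (card (prefix_set vs Y k \<inter> X)) < real k / s))
         \<and> (sparse vs s Y X \<longrightarrow> real (card X) < real (card Y) / s)"
proof -
  have YV: "Y \<subseteq> set vs" using Y_sub vs_set by simp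
  have finY: "finite Y" using finV Y_sub finite_subset by blast
  have finX: "finite X" using finY X_sub finite_subset by blast
  have cY: "card Y \<ge> 1" using finY Y_ne by (simp add: Suc_leI card_gt_0_iff)
  have fwd: "\<forall>k\<in>{1..card Y}. real (card (prefix_set vs Y k \<inter> X)) < real k / s"
    if sp: "sparse vs s Y X"
  proof (rule ballI, rule ccontr)
    fix k assume k: "k \<in> {1..card Y}"
      and nk: "\<not> real (card (prefix_set vs Y k \<inter> X)) < real k / s"
    define Z where "Z = prefix_set vs Y k \<inter> X"
    have ge: "real k \<le> s * real (card Z)" using nk s_ge unfolding Z_def
      using divide_le_eq[of "real k" s] by (simp add: mult.commute not_less)
    have "card Z > 0" using ge k s_ge by (cases "card Z = 0") auto
    hence Zne: "Z \<noteq> {}" by auto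
    have "k \<le> nat \<lfloor>s * real (card Z)\<rfloor>" using ge
      by linarith
    hence "prefix_set vs Y k \<subseteq> prefix_set_real vs Y (s * real (card Z))"
      unfolding prefix_set_real_def by (rule prefix_mono)
    hence "Z \<subseteq> prefix_set_real vs Y (s * real (card Z))"
      unfolding Z_def by (rule subset_trans[rotated]) auto
    hence "principal vs s Y Z" unfolding principal_def using Zne X_sub Z_def by auto
    moreover have "Z \<subseteq> X" unfolding Z_def by auto
    ultimately show False using sp unfolding sparse_def by blast
  qed
  have bwd: "sparse vs s Y X"
    if H: "\<forall>k\<in>{1..card Y}. real (card (prefix_set vs Y k \<inter> X)) < real k / s"
  proof -
    have "\<not> principal vs s Y Z" if ZX: "Z \<subseteq> X" for Z
    proof
      assume P: "principal vs s Y Z"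
      define m where "m = nat \<lfloor>s * real (card Z)\<rfloor>"
      define k where "k = min m (card Y)"
      have finZ: "finite Z" using ZX finX finite_subset by blast
      have Zne: "Z \<noteq> {}" using P principal_def by blast
      have cZ: "card Z \<ge> 1" using finZ Zne by (simp add: Suc_leI card_gt_0_iff)
      have "s * real (card Z) \<ge> 1" using cZ s_ge
        by (metis mult_mono' of_nat_1 of_nat_le_iff mult_1_right zero_le_one)
      hence m1: "m \<ge> 1" unfolding m_def by linarith
      have mle: "real m \<le> s * real (card Z)" unfolding m_def
        using \<open>s * real (card Z) \<ge> 1\<close> by linarith
      have ZP: "Z \<subseteq> prefix_set vs Y m" using P unfolding principal_def prefix_set_real_def m_def by blast
      have "prefix_set vs Y m = prefix_set vs Y k"
      proof (cases "m \<le> card Y")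
        case True thus ?thesis unfolding k_def by simp
      next
        case False thus ?thesis unfolding k_def
          using prefix_big[OF vs_distinct YV] by simp
      qed
      hence ZPk: "Z \<subseteq> prefix_set vs Y k \<inter> X" using ZP ZX by auto
      have kin: "k \<in> {1..card Y}" using m1 cY unfolding k_def by auto
      have "card Z \<le> card (prefix_set vs Y k \<inter> X)"
        using ZPk finX by (meson card_mono finite_Int)
      hence "real (card Z) < real k / s" using H kin by force
      hence "s * real (card Z) < real k" using s_ge by (simp add: pos_less_divide_eq mult.commute)
      moreover have "real k \<le> real m" unfolding k_def by simp
      ultimately show False using mle by linarith
    qed
    thus ?thesis unfolding sparse_def using X_sub by blast
  qed
  have last: "real (card X) < real (card Y) / s" if sp: "sparse vs s Y X"
  proof -
    have "real (card (prefix_set vs Y (card Y) \<inter> X)) < real (card Y) / s"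
      using fwd[OF sp] cY by auto
    moreover have "prefix_set vs Y (card Y) \<inter> X = X"
      using prefix_big[OF vs_distinct YV] X_sub by auto
    ultimately show ?thesis by simp
  qed
  show ?thesis using fwd bwd last by blast
qed

end
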